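(* Let $n\geq 1$. The map $\rho_i\mapsto x^iy^{-i}$ ($1\leq i\leq n$) extends to a group isomorphism from the group with generators $\rho_1,\dots,\rho_n$ and relations $\rho_1\rho_n\rho_i=\rho_{i+1}\rho_n$ ($1\leq i\leq n-1$) onto the group $G(n,n+1)=\langle x,y\mid x^n=y^{n+1}\rangle$.
   Context: $G(n,n+1)$ is the $(n,n+1)$-torus knot group, given by the displayed presentation. *)

theory Defs
  imports "HOL-Algebra.Group"
begin

text \<open>Group presentations. A word over an alphabet of generators is a list of
letters (a, b); b = False means the generator a, b = True means its inverse.\<close>

type_synonym 'a word = "('a \<times> bool) list"

definition inv_word :: "'a word \<Rightarrow> 'a word" where
  "inv_word w = rev (map (\<lambda>(a, b). (a, \<not> b)) w)"

inductive pres_eq :: "'a word set \<Rightarrow> 'a word \<Rightarrow> 'a word \<Rightarrow> bool" for R where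
  refl: "pres_eq R w w"
| sym: "pres_eq R u v \<Longrightarrow> pres_eq R v u"
| trans: "pres_eq R u v \<Longrightarrow> pres_eq R v w \<Longrightarrow> pres_eq R u w"
| cancel: "pres_eq R (u @ [(a, b), (a, \<not> b)] @ v) (u @ v)"
| rel: "r \<in> R \<Longrightarrow> pres_eq R (u @ r @ v) (u @ v)"

definition pres_class :: "'a word set \<Rightarrow> 'a word \<Rightarrow> 'a word set" where
  "pres_class R w = {v. pres_eq R w v}"

definition presented_group :: "'a set \<Rightarrow> 'a word set \<Rightarrow> 'a word set monoid" where
  "presented_group S R =
     \<lparr> carrier = {pres_class R w | w. set w \<subseteq> S \<times> UNIV},
       mult = (\<lambda>A B. \<Union>a\<in>A. \<Union>b\<in>B. pres_class R (a @ b)),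
       one = pres_class R [] \<rparr>"

definition rho_rels :: "nat \<Rightarrow> nat word set" where
  "rho_rels n = {[(1, False), (n, False), (i, False)] @ inv_word [(Suc i, False), (n, False)]
                 | i. 1 \<le> i \<and> i \<le> n - 1}"

definition rho_group :: "nat \<Rightarrow> nat word set monoid" where
  "rho_group n = presented_group {1..n} (rho_rels n)"

datatype gxy = X | Y

definition torus_rels :: "nat \<Rightarrow> nat \<Rightarrow> gxy word set" where
  "torus_rels p q = {replicate p (X, False) @ replicate q (Y, True)}"

definition torus_group :: "nat \<Rightarrow> nat \<Rightarrow> gxy word set monoid" where
  "torus_group p q = presented_group UNIV (torus_rels p q)"

end

theory Submission
  imports Defs
begin


context group begin

lemma cancel_l: "x \<in> carrier G \<Longrightarrow> z \<in> carrier G \<Longrightarrow> inv x \<otimes> (x \<otimes> z) = z"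
  by (simp add: m_assoc[symmetric])
lemma cancel_r: "x \<in> carrier G \<Longrightarrow> z \<in> carrier G \<Longrightarrow> x \<otimes> (inv x \<otimes> z) = z"
  by (simp add: m_assoc[symmetric])

lemma alg_rel_t:
  assumes x: "x \<in> carrier G" and y: "y \<in> carrier G" and e: "x [^] n = y [^] Suc n"
  shows "(x [^] (1::nat) \<otimes> inv (y [^] (1::nat))) \<otimes> ((x [^] n \<otimes> inv (y [^] n)) \<otimes>
          ((x [^] i \<otimes> inv (y [^] i)) \<otimes> (inv (x [^] n \<otimes> inv (y [^] n)) \<otimes>
          inv (x [^] Suc i \<otimes> inv (y [^] Suc i))))) = \<one>"
proof -
  have cn: "x [^] n \<otimes> inv (y [^] n) = y"
    unfolding e nat_pow_Suc2[OF y] using y by (simp add: m_assoc del: nat_pow_Suc)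
  have c1: "x [^] (1::nat) \<otimes> inv (y [^] (1::nat)) = x \<otimes> inv y" using x y by simp
  have s: "x \<otimes> inv y \<otimes> (y \<otimes> (x [^] i \<otimes> inv (y [^] i) \<otimes> inv y)) = x [^] Suc i \<otimes> inv (y [^] Suc i)"
    unfolding nat_pow_Suc2[OF x] nat_pow_Suc2[OF y] using x y by (simp add: m_assoc inv_mult_group cancel_l del: nat_pow_Suc)
  have "(x \<otimes> inv y) \<otimes> (y \<otimes> ((x [^] i \<otimes> inv (y [^] i)) \<otimes> (inv y \<otimes> inv (x [^] Suc i \<otimes> inv (y [^] Suc i)))))
     = (x \<otimes> inv y \<otimes> (y \<otimes> (x [^] i \<otimes> inv (y [^] i) \<otimes> inv y))) \<otimes> inv (x [^] Suc i \<otimes> inv (y [^] Suc i))"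
    using x y by (simp add: m_assoc del: nat_pow_Suc)
  also have "\<dots> = \<one>" unfolding s using x y by simp
  finally show ?thesis unfolding cn c1 .
qed

lemma alg_rel_r:
  assumes a: "a \<in> carrier G" and b: "b \<in> carrier G" and c: "c \<in> carrier G" and d: "d \<in> carrier G"
    and e: "a \<otimes> (b \<otimes> (c \<otimes> (inv b \<otimes> inv d))) = \<one>"
  shows "d = (a \<otimes> b) \<otimes> c \<otimes> inv b"
proof -
  have "(a \<otimes> b \<otimes> c \<otimes> inv b) \<otimes> inv d = \<one>" using e a b c d by (simp add: m_assoc)
  then show ?thesis using a b c d
    by (metis inv_closed inv_equality inv_inv m_closed)
qed

lemma alg_step:
  assumes a: "a \<in> carrier G" and b: "b \<in> carrier G"
  shows "(a \<otimes> b) \<otimes> ((a \<otimes> b) [^] i \<otimes> inv (b [^] i)) \<otimes> inv b = (a \<otimes> b) [^] Suc i \<otimes> inv (b [^] Suc i)"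
  unfolding nat_pow_Suc2[OF m_closed[OF a b]] nat_pow_Suc2[OF b] using a b by (simp add: m_assoc inv_mult_group del: nat_pow_Suc)

end


lemma pe_app: "pres_eq R u v \<Longrightarrow> pres_eq R (a @ u @ b) (a @ v @ b)"
proof (induction rule: pres_eq.induct)
  case (refl w) show ?case by (rule pres_eq.refl)
next
  case (sym u v) show ?case using sym.IH by (rule pres_eq.sym)
next
  case (trans u v w) thus ?case by (metis pres_eq.trans)
next
  case (cancel u x y v)
  show ?case using pres_eq.cancel[of R "a@u" x y "v@b"] by simp
next
  case (rel r u v)
  show ?case using pres_eq.rel[OF rel, of "a@u" "v@b"] by simp
qed

lemma pe_app2: "pres_eq R u u' \<Longrightarrow> pres_eq R v v' \<Longrightarrow> pres_eq R (u @ v) (u' @ v')"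
  using pe_app[of R u u' "[]" v] pe_app[of R v v' u' "[]"]
  by (metis append_Nil append_Nil2 pres_eq.trans)

lemma cls_eq: "pres_class R u = pres_class R v \<longleftrightarrow> pres_eq R u v"
proof
  assume "pres_class R u = pres_class R v"
  moreover have "v \<in> pres_class R v" by (simp add: pres_class_def pres_eq.refl)
  ultimately have "v \<in> pres_class R u" by simp
  then show "pres_eq R u v" by (simp add: pres_class_def)
next
  assume h: "pres_eq R u v"
  show "pres_class R u = pres_class R v" unfolding pres_class_def
    using h by (blast intro: pres_eq.trans pres_eq.sym)
qed

lemma cls_mult: "(\<Union>a\<in>pres_class R u. \<Union>b\<in>pres_class R v. pres_class R (a @ b)) = pres_class R (u @ v)"
proof -
  have "\<And>a b. a \<in> pres_class R u \<Longrightarrow> b \<in> pres_class R v \<Longrightarrow> pres_class R (a @ b) = pres_class R (u @ v)"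
    by (metis cls_eq mem_Collect_eq pres_class_def pe_app2 pres_eq.sym)
  moreover have "u \<in> pres_class R u" "v \<in> pres_class R v" by (simp_all add: pres_class_def pres_eq.refl)
  ultimately show ?thesis by blast
qed

lemma pg_mult: "pres_class R u \<otimes>\<^bsub>presented_group S R\<^esub> pres_class R v = pres_class R (u @ v)"
  by (simp add: presented_group_def cls_mult)

lemma inv_word_Nil[simp]: "inv_word [] = []" by (simp add: inv_word_def)
lemma inv_word_Cons[simp]: "inv_word ((a,b)#w) = inv_word w @ [(a, \<not>b)]" by (simp add: inv_word_def)
lemma inv_word_append[simp]: "inv_word (u@v) = inv_word v @ inv_word u" by (simp add: inv_word_def)
lemma inv_inv[simp]: "inv_word (inv_word w) = w"
  by (induction w) (auto simp: inv_word_def)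

lemma pe_rinv: "pres_eq R (w @ inv_word w) []"
proof (induction w)
  case Nil show ?case by (simp add: pres_eq.refl)
next
  case (Cons p w)
  obtain a b where p: "p = (a,b)" by (cases p)
  have 1: "pres_eq R ([(a,b)] @ (w @ inv_word w) @ [(a,\<not>b)]) ([(a,b)] @ [] @ [(a,\<not>b)])"
    by (rule pe_app[OF Cons.IH])
  have 2: "pres_eq R ([] @ [(a,b),(a,\<not>b)] @ []) ([] @ [])" by (rule pres_eq.cancel)
  from pres_eq.trans[OF 1] 2 show ?case using p by simp
qed

lemma pe_linv: "pres_eq R (inv_word w @ w) []"
  using pe_rinv[of R "inv_word w"] by simp

definition G :: "'a word set \<Rightarrow> 'a word set monoid" where "G R = presented_group UNIV R"

lemma carrier_G: "carrier (G R) = range (pres_class R)"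
  by (auto simp: G_def presented_group_def)
lemma G_mult: "pres_class R u \<otimes>\<^bsub>G R\<^esub> pres_class R v = pres_class R (u@v)"
  by (simp add: G_def pg_mult)
lemma G_one: "\<one>\<^bsub>G R\<^esub> = pres_class R []"
  by (simp add: G_def presented_group_def)

lemma group_G: "group (G R)"
proof (rule groupI)
  fix x y assume "x \<in> carrier (G R)" "y \<in> carrier (G R)"
  then show "x \<otimes>\<^bsub>G R\<^esub> y \<in> carrier (G R)" by (auto simp: carrier_G G_mult)
next
  show "\<one>\<^bsub>G R\<^esub> \<in> carrier (G R)" by (simp add: carrier_G G_one)
next
  fix x y z assume "x \<in> carrier (G R)" "y \<in> carrier (G R)" "z \<in> carrier (G R)"
  then show "x \<otimes>\<^bsub>G R\<^esub> y \<otimes>\<^bsub>G R\<^esub> z = x \<otimes>\<^bsub>G R\<^esub> (y \<otimes>\<^bsub>G R\<^esub> z)"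
    by (auto simp: carrier_G G_mult)
next
  fix x assume "x \<in> carrier (G R)"
  then show "\<one>\<^bsub>G R\<^esub> \<otimes>\<^bsub>G R\<^esub> x = x" by (auto simp: carrier_G G_mult G_one)
next
  fix x assume "x \<in> carrier (G R)"
  then obtain w where w: "x = pres_class R w" by (auto simp: carrier_G)
  have "pres_class R (inv_word w) \<otimes>\<^bsub>G R\<^esub> x = \<one>\<^bsub>G R\<^esub>"
    using w by (simp add: G_mult G_one cls_eq pe_linv)
  then show "\<exists>y\<in>carrier (G R). y \<otimes>\<^bsub>G R\<^esub> x = \<one>\<^bsub>G R\<^esub>" by (auto simp: carrier_G)
qed

lemma cls_carrier[simp]: "pres_class R w \<in> carrier (G R)" by (simp add: carrier_G)

lemma cls_inv: "inv\<^bsub>G R\<^esub> (pres_class R w) = pres_class R (inv_word w)"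
  by (rule group.inv_equality[OF group_G]) (simp_all add: G_mult G_one cls_eq pe_linv)

lemma cls_Cons: "pres_class R ((a,b)#w) =
   (if b then inv\<^bsub>G R\<^esub> (pres_class R [(a,False)]) else pres_class R [(a,False)]) \<otimes>\<^bsub>G R\<^esub> pres_class R w"
  by (simp add: cls_inv G_mult)

lemma cls_append: "pres_class R (u @ v) = pres_class R u \<otimes>\<^bsub>G R\<^esub> pres_class R v"
  by (simp add: G_mult)

lemma cls_rep: "pres_class R (replicate k p) = pres_class R [p] [^]\<^bsub>G R\<^esub> k"
proof (induction k)
  case 0 show ?case by (simp add: G_one)
next
  case (Suc k)
  have "pres_class R (replicate (Suc k) p) = pres_class R [p] \<otimes>\<^bsub>G R\<^esub> pres_class R (replicate k p)"
    by (simp add: G_mult)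
  also have "\<dots> = pres_class R [p] [^]\<^bsub>G R\<^esub> Suc k"
  proof -
    interpret group "G R" by (rule group_G)
    show ?thesis using Suc by (simp add: nat_pow_Suc2[symmetric] del: nat_pow_Suc)
  qed
  finally show ?case .
qed

definition subst :: "('a \<Rightarrow> 'b word) \<Rightarrow> 'a word \<Rightarrow> 'b word" where
  "subst \<phi> w = concat (map (\<lambda>(a,b). if b then inv_word (\<phi> a) else \<phi> a) w)"

lemma subst_Nil[simp]: "subst \<phi> [] = []" by (simp add: subst_def)
lemma subst_Cons[simp]: "subst \<phi> ((a,b)#w) = (if b then inv_word (\<phi> a) else \<phi> a) @ subst \<phi> w"
  by (simp add: subst_def)
lemma subst_append[simp]: "subst \<phi> (u@v) = subst \<phi> u @ subst \<phi> v" by (simp add: subst_def)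

lemma subst_inv: "subst \<phi> (inv_word w) = inv_word (subst \<phi> w)"
  by (induction w) auto

lemma subst_subst: "subst \<psi> (subst \<phi> w) = subst (\<lambda>a. subst \<psi> (\<phi> a)) w"
  by (induction w) (auto simp: subst_inv)

lemma subst_pe:
  assumes rels: "\<And>r. r \<in> R1 \<Longrightarrow> pres_eq R2 (subst \<phi> r) []"
  shows "pres_eq R1 u v \<Longrightarrow> pres_eq R2 (subst \<phi> u) (subst \<phi> v)"
proof (induction rule: pres_eq.induct)
  case (refl w) show ?case by (rule pres_eq.refl)
next
  case (sym u v) show ?case using sym.IH by (rule pres_eq.sym)
next
  case (trans u v w) thus ?case by (metis pres_eq.trans)
next
  case (cancel u a b v)
  have "pres_eq R2 (subst \<phi> [(a,b),(a,\<not>b)]) []"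
    by (cases b) (simp_all add: pe_linv pe_rinv)
  from pe_app[OF this, of "subst \<phi> u" "subst \<phi> v"] show ?case by simp
next
  case (rel r u v)
  from pe_app[OF rels[OF rel], of "subst \<phi> u" "subst \<phi> v"] show ?case by simp
qed

lemma cls_subst_Cons: "pres_class R (subst \<phi> ((a,b)#w)) =
   (if b then inv\<^bsub>G R\<^esub> (pres_class R (\<phi> a)) else pres_class R (\<phi> a)) \<otimes>\<^bsub>G R\<^esub> pres_class R (subst \<phi> w)"
  by (simp add: cls_inv G_mult)

lemma cls_subst_id:
  assumes "\<And>a. a \<in> fst ` set w \<Longrightarrow> pres_class R (\<theta> a) = pres_class R [(a,False)]"
  shows "pres_class R (subst \<theta> w) = pres_class R w"
  using assms
proof (induction w)
  case Nil show ?case by simp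
next
  case (Cons p w)
  obtain a b where p: "p = (a,b)" by (cases p)
  have h1: "pres_class R (\<theta> a) = pres_class R [(a,False)]" by (rule Cons.prems) (simp add: p)
  have h2: "pres_class R (subst \<theta> w) = pres_class R w" by (rule Cons.IH, rule Cons.prems) simp
  show ?case unfolding p cls_subst_Cons cls_Cons[of R a b w] h1 h2 ..
qed

lemma cls_subst_rep: "pres_class R (subst \<phi> (replicate k (a,b))) =
   (if b then inv\<^bsub>G R\<^esub> (pres_class R (\<phi> a)) else pres_class R (\<phi> a)) [^]\<^bsub>G R\<^esub> k"
proof (induction k)
  case 0 show ?case by (simp add: G_one)
next
  case (Suc k)
  interpret group "G R" by (rule group_G)
  have "pres_class R (subst \<phi> (replicate (Suc k) (a,b))) =
    (if b then inv\<^bsub>G R\<^esub> (pres_class R (\<phi> a)) else pres_class R (\<phi> a)) \<otimes>\<^bsub>G R\<^esub> pres_class R (subst \<phi> (replicate k (a,b)))"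
    by (simp only: replicate_Suc cls_subst_Cons)
  also have "\<dots> = (if b then inv\<^bsub>G R\<^esub> (pres_class R (\<phi> a)) else pres_class R (\<phi> a)) [^]\<^bsub>G R\<^esub> Suc k"
    unfolding Suc by (rule nat_pow_Suc2[symmetric]) simp
  finally show ?case .
qed

lemma fst_inv_word[simp]: "fst ` set (inv_word w) = fst ` set w"
  by (simp add: inv_word_def image_image case_prod_beta)

lemma fst_subst_Cons: "fst ` set (subst \<phi> ((a,b)#w)) = fst ` set (\<phi> a) \<union> fst ` set (subst \<phi> w)"
  by (cases b) (simp_all add: image_Un)

lemma fst_subst: "fst ` set (subst \<phi> w) \<subseteq> (\<Union>a. fst ` set (\<phi> a))"
proof (induction w)
  case Nil show ?case by simp
next
  case (Cons p w)
  obtain a b where p: "p = (a,b)" by (cases p)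
  have e: "fst ` set (subst \<phi> (p#w)) = fst ` set (\<phi> a) \<union> fst ` set (subst \<phi> w)"
    unfolding p by (rule fst_subst_Cons)
  have "fst ` set (\<phi> a) \<subseteq> (\<Union>a. fst ` set (\<phi> a))" by (rule UN_upper) simp
  then show ?case unfolding e using Cons.IH by (rule Un_least)
qed



definition phi :: "nat \<Rightarrow> gxy word" where
  "phi i = replicate i (X,False) @ replicate i (Y,True)"

definition psi :: "nat \<Rightarrow> gxy \<Rightarrow> nat word" where
  "psi n g = (case g of X \<Rightarrow> [(1,False),(n,False)] | Y \<Rightarrow> [(n,False)])"

lemma cls_inv1: "pres_class R [(a,True)] = inv\<^bsub>G R\<^esub> (pres_class R [(a,False)])"
  by (simp add: cls_inv inv_word_def)

lemma subst_pe':
  assumes "\<forall>r\<in>R1. pres_eq R2 (subst \<phi> r) []" "pres_eq R1 u v"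
  shows "pres_eq R2 (subst \<phi> u) (subst \<phi> v)"
  using subst_pe[of R1 R2 \<phi> u v] assms by blast

lemma torus_phi: "pres_class R (phi i) =
   pres_class R [(X,False)] [^]\<^bsub>G R\<^esub> i \<otimes>\<^bsub>G R\<^esub> inv\<^bsub>G R\<^esub> (pres_class R [(Y,False)] [^]\<^bsub>G R\<^esub> i)"
proof -
  interpret group "G R" by (rule group_G)
  show ?thesis unfolding phi_def cls_append cls_rep cls_inv1
    by (simp add: nat_pow_inv)
qed

lemma torus_eq:
  "pres_class (torus_rels n (Suc n)) [(X,False)] [^]\<^bsub>G (torus_rels n (Suc n))\<^esub> n =
   pres_class (torus_rels n (Suc n)) [(Y,False)] [^]\<^bsub>G (torus_rels n (Suc n))\<^esub> Suc n"
proof -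
  let ?R = "torus_rels n (Suc n)"
  interpret group "G ?R" by (rule group_G)
  have "pres_eq ?R ([] @ (replicate n (X,False) @ replicate (Suc n) (Y,True)) @ []) ([] @ [])"
    by (rule pres_eq.rel) (simp add: torus_rels_def)
  then have "pres_class ?R (replicate n (X,False) @ replicate (Suc n) (Y,True)) = pres_class ?R []"
    by (simp add: cls_eq)
  then have "pres_class ?R [(X,False)] [^]\<^bsub>G ?R\<^esub> n \<otimes>\<^bsub>G ?R\<^esub>
     inv\<^bsub>G ?R\<^esub> (pres_class ?R [(Y,False)] [^]\<^bsub>G ?R\<^esub> Suc n) = \<one>\<^bsub>G ?R\<^esub>"
    by (simp only: cls_append cls_rep cls_inv1 nat_pow_inv[OF cls_carrier] G_one)
  then show ?thesis
    by (metis inv_solve_right l_one cls_carrier nat_pow_closed one_closed)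
qed

lemma torus_rel:
  assumes "r \<in> rho_rels n"
  shows "pres_eq (torus_rels n (Suc n)) (subst phi r) []"
proof -
  let ?R = "torus_rels n (Suc n)"
  interpret group "G ?R" by (rule group_G)
  obtain i where r: "r = [(1,False)] @ [(n,False)] @ [(i,False)] @ inv_word [(n,False)] @ inv_word [(Suc i,False)]"
    using assms by (auto simp: rho_rels_def)
  have "pres_class ?R (subst phi r) = \<one>\<^bsub>G ?R\<^esub>"
    unfolding r subst_append subst_inv cls_append cls_inv[symmetric]
    apply (simp only: subst_Cons subst_Nil if_False append_Nil2 torus_phi)
    by (rule alg_rel_t[OF cls_carrier cls_carrier torus_eq])
  then show ?thesis by (simp add: G_one cls_eq)
qed

lemma torus_letters: "pres_class (torus_rels n (Suc n)) (subst phi (psi n g)) = pres_class (torus_rels n (Suc n)) [(g,False)]"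
proof -
  let ?R = "torus_rels n (Suc n)"
  interpret group "G ?R" by (rule group_G)
  let ?x = "pres_class ?R [(X,False)]" and ?y = "pres_class ?R [(Y,False)]"
  have cn: "?x [^]\<^bsub>G ?R\<^esub> n \<otimes>\<^bsub>G ?R\<^esub> inv\<^bsub>G ?R\<^esub> (?y [^]\<^bsub>G ?R\<^esub> n) = ?y"
    unfolding torus_eq nat_pow_Suc2[OF cls_carrier] by (simp add: m_assoc del: nat_pow_Suc)
  show ?thesis
  proof (cases g)
    case X
    have e: "subst phi (psi n g) = phi 1 @ phi n" by (simp add: X psi_def)
    show ?thesis unfolding e cls_append torus_phi cn using X by (simp add: m_assoc)
  next
    case Y
    have e: "subst phi (psi n g) = phi n" by (simp add: Y psi_def)
    show ?thesis unfolding e torus_phi cn using Y by simp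
  qed
qed

lemma rho_rel_i:
  assumes "1 \<le> i" "i \<le> n - 1"
  shows "pres_class (rho_rels n) [(Suc i,False)] =
     pres_class (rho_rels n) [(1,False)] \<otimes>\<^bsub>G (rho_rels n)\<^esub> pres_class (rho_rels n) [(n,False)]
       \<otimes>\<^bsub>G (rho_rels n)\<^esub> pres_class (rho_rels n) [(i,False)]
       \<otimes>\<^bsub>G (rho_rels n)\<^esub> inv\<^bsub>G (rho_rels n)\<^esub> pres_class (rho_rels n) [(n,False)]"
proof -
  let ?R = "rho_rels n"
  interpret group "G ?R" by (rule group_G)
  have m: "[(1,False)] @ [(n,False)] @ [(i,False)] @ inv_word [(n,False)] @ inv_word [(Suc i,False)] \<in> ?R"
    using assms unfolding rho_rels_def by auto
  have "pres_eq ?R ([] @ ([(1,False)] @ [(n,False)] @ [(i,False)] @ inv_word [(n,False)] @ inv_word [(Suc i,False)]) @ []) ([] @ [])"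
    by (rule pres_eq.rel[OF m])
  then have "pres_class ?R ([(1,False)] @ [(n,False)] @ [(i,False)] @ inv_word [(n,False)] @ inv_word [(Suc i,False)]) = \<one>\<^bsub>G ?R\<^esub>"
    by (simp only: append_Nil append_Nil2 G_one cls_eq)
  then have "pres_class ?R [(1,False)] \<otimes>\<^bsub>G ?R\<^esub> (pres_class ?R [(n,False)] \<otimes>\<^bsub>G ?R\<^esub> (pres_class ?R [(i,False)] \<otimes>\<^bsub>G ?R\<^esub>
     (inv\<^bsub>G ?R\<^esub> pres_class ?R [(n,False)] \<otimes>\<^bsub>G ?R\<^esub> inv\<^bsub>G ?R\<^esub> pres_class ?R [(Suc i,False)]))) = \<one>\<^bsub>G ?R\<^esub>"
    by (simp only: cls_append cls_inv[symmetric])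
  then show ?thesis by (rule alg_rel_r[OF cls_carrier cls_carrier cls_carrier cls_carrier])
qed

lemma rho_formula:
  assumes "1 \<le> i" "i \<le> n"
  shows "pres_class (rho_rels n) [(i,False)] =
     (pres_class (rho_rels n) [(1,False)] \<otimes>\<^bsub>G (rho_rels n)\<^esub> pres_class (rho_rels n) [(n,False)]) [^]\<^bsub>G (rho_rels n)\<^esub> i
       \<otimes>\<^bsub>G (rho_rels n)\<^esub> inv\<^bsub>G (rho_rels n)\<^esub> (pres_class (rho_rels n) [(n,False)] [^]\<^bsub>G (rho_rels n)\<^esub> i)"
  using assms
proof (induction i)
  case 0 then show ?case by simp
next
  case (Suc i)
  let ?R = "rho_rels n"
  interpret group "G ?R" by (rule group_G)
  show ?case
  proof (cases "i = 0")
    case True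
    then show ?thesis by (simp add: m_assoc)
  next
    case False
    then have "1 \<le> i" "i \<le> n - 1" using Suc.prems by auto
    from rho_rel_i[OF this] Suc.IH[OF \<open>1 \<le> i\<close>] Suc.prems show ?thesis
      using alg_step[OF cls_carrier cls_carrier] by simp
  qed
qed

lemma cls2: "pres_class R [a,b] = pres_class R [a] \<otimes>\<^bsub>G R\<^esub> pres_class R [b]"
  by (simp add: G_mult)

lemma rho_psi_X: "pres_class R (psi n X) = pres_class R [(1,False)] \<otimes>\<^bsub>G R\<^esub> pres_class R [(n,False)]"
  by (simp add: psi_def G_mult)

lemma rho_rel:
  assumes "1 \<le> n" "r \<in> torus_rels n (Suc n)"
  shows "pres_eq (rho_rels n) (subst (psi n) r) []"
proof -
  let ?R = "rho_rels n"
  interpret group "G ?R" by (rule group_G)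
  have r: "r = replicate n (X,False) @ replicate (Suc n) (Y,True)" using assms by (simp add: torus_rels_def)
  have f: "pres_class ?R [(n,False)] =
     (pres_class ?R [(1,False)] \<otimes>\<^bsub>G ?R\<^esub> pres_class ?R [(n,False)]) [^]\<^bsub>G ?R\<^esub> n
       \<otimes>\<^bsub>G ?R\<^esub> inv\<^bsub>G ?R\<^esub> (pres_class ?R [(n,False)] [^]\<^bsub>G ?R\<^esub> n)"
    using rho_formula[of n n] assms by simp
  have "pres_class ?R (subst (psi n) r) =
     (pres_class ?R [(1,False)] \<otimes>\<^bsub>G ?R\<^esub> pres_class ?R [(n,False)]) [^]\<^bsub>G ?R\<^esub> n
       \<otimes>\<^bsub>G ?R\<^esub> inv\<^bsub>G ?R\<^esub> (pres_class ?R [(n,False)] [^]\<^bsub>G ?R\<^esub> Suc n)"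
    unfolding r subst_append cls_append cls_subst_rep
    by (simp only: if_True if_False cls2 psi_def gxy.case nat_pow_inv[OF cls_carrier])
  also have "\<dots> = \<one>\<^bsub>G ?R\<^esub>"
  proof -
    have i: "inv\<^bsub>G ?R\<^esub> (pres_class ?R [(n,False)] [^]\<^bsub>G ?R\<^esub> Suc n) =
       inv\<^bsub>G ?R\<^esub> (pres_class ?R [(n,False)] [^]\<^bsub>G ?R\<^esub> n) \<otimes>\<^bsub>G ?R\<^esub> inv\<^bsub>G ?R\<^esub> pres_class ?R [(n,False)]"
      by (simp only: nat_pow_Suc2[OF cls_carrier] inv_mult_group[OF cls_carrier nat_pow_closed[OF cls_carrier]])
    show ?thesis unfolding i
      by (simp only: m_assoc[symmetric] nat_pow_closed cls_carrier m_closed inv_closed f[symmetric] r_inv)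
  qed
  finally show ?thesis by (simp add: G_one cls_eq)
qed

lemma rho_letters:
  assumes "1 \<le> i" "i \<le> n"
  shows "pres_class (rho_rels n) (subst (psi n) (phi i)) = pres_class (rho_rels n) [(i,False)]"
proof -
  let ?R = "rho_rels n"
  interpret group "G ?R" by (rule group_G)
  show ?thesis
    unfolding rho_formula[OF assms] phi_def subst_append cls_append cls_subst_rep rho_psi_X
    by (simp add: psi_def nat_pow_inv)
qed



theorem proposition4p2:
  fixes n :: nat
  assumes "n \<ge> 1"
  shows "\<exists>h. h \<in> iso (rho_group n) (torus_group n (n + 1)) \<and>
           (\<forall>i\<in>{1..n}. h (pres_class (rho_rels n) [(i, False)]) =
              pres_class (torus_rels n (n + 1)) (replicate i (X, False) @ replicate i (Y, True)))"
proof -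
  let ?R1 = "rho_rels n" and ?R2 = "torus_rels n (Suc n)"
  have tr: "\<forall>r\<in>?R1. pres_eq ?R2 (subst phi r) []" using torus_rel by blast
  have rr: "\<forall>r\<in>?R2. pres_eq ?R1 (subst (psi n) r) []" using rho_rel[OF assms] by blast
  define h where "h A = pres_class ?R2 (subst phi (SOME w. A = pres_class ?R1 w))" for A
  have hc: "h (pres_class ?R1 w) = pres_class ?R2 (subst phi w)" for w
  proof -
    have "\<exists>w'. pres_class ?R1 w = pres_class ?R1 w'" by blast
    then have "pres_class ?R1 w = pres_class ?R1 (SOME w'. pres_class ?R1 w = pres_class ?R1 w')"
      by (rule someI_ex)
    then have "pres_eq ?R1 w (SOME w'. pres_class ?R1 w = pres_class ?R1 w')" by (simp add: cls_eq)
    then have "pres_eq ?R2 (subst phi w) (subst phi (SOME w'. pres_class ?R1 w = pres_class ?R1 w'))"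
      by (rule subst_pe'[OF tr])
    then show ?thesis unfolding h_def by (simp add: cls_eq pres_eq.sym)
  qed
  have bk: "pres_class ?R1 (subst (psi n) (subst phi u)) = pres_class ?R1 u"
    if "set u \<subseteq> {1..n} \<times> UNIV" for u
    unfolding subst_subst
  proof (rule cls_subst_id)
    fix a assume "a \<in> fst ` set u"
    then have "1 \<le> a" "a \<le> n" using that by auto
    then show "pres_class ?R1 (subst (psi n) (phi a)) = pres_class ?R1 [(a, False)]"
      by (rule rho_letters)
  qed
  have fwd: "pres_class ?R2 (subst phi (subst (psi n) v)) = pres_class ?R2 v" for v
    unfolding subst_subst by (rule cls_subst_id) (rule torus_letters)
  have carr1: "carrier (rho_group n) = {pres_class ?R1 w | w. set w \<subseteq> {1..n} \<times> UNIV}"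
    by (simp add: rho_group_def presented_group_def)
  have T: "torus_group n (n + 1) = G ?R2" by (simp add: torus_group_def G_def)
  have hom: "h \<in> hom (rho_group n) (G ?R2)"
  proof (rule homI)
    fix x assume "x \<in> carrier (rho_group n)"
    then obtain w where "x = pres_class ?R1 w" using carr1 by auto
    then show "h x \<in> carrier (G ?R2)" by (simp add: hc)
  next
    fix x y assume "x \<in> carrier (rho_group n)" "y \<in> carrier (rho_group n)"
    then obtain u v where "x = pres_class ?R1 u" "y = pres_class ?R1 v" using carr1 by auto
    then show "h (x \<otimes>\<^bsub>rho_group n\<^esub> y) = h x \<otimes>\<^bsub>G ?R2\<^esub> h y"
      by (simp add: rho_group_def pg_mult hc G_mult)
  qed
  have bij: "bij_betw h (carrier (rho_group n)) (carrier (G ?R2))"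
  proof (rule bij_betw_imageI)
    show "inj_on h (carrier (rho_group n))"
    proof (rule inj_onI)
      fix x y assume x: "x \<in> carrier (rho_group n)" and y: "y \<in> carrier (rho_group n)" and e: "h x = h y"
      from x obtain u where u: "x = pres_class ?R1 u" "set u \<subseteq> {1..n} \<times> UNIV" using carr1 by auto
      from y obtain v where v: "y = pres_class ?R1 v" "set v \<subseteq> {1..n} \<times> UNIV" using carr1 by auto
      have "pres_eq ?R2 (subst phi u) (subst phi v)" using e u v by (simp add: hc cls_eq)
      then have "pres_eq ?R1 (subst (psi n) (subst phi u)) (subst (psi n) (subst phi v))"
        by (rule subst_pe'[OF rr])
      then have "pres_class ?R1 (subst (psi n) (subst phi u)) = pres_class ?R1 (subst (psi n) (subst phi v))"
        by (simp add: cls_eq)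
      then show "x = y" using u v bk by simp
    qed
  next
    show "h ` carrier (rho_group n) = carrier (G ?R2)"
    proof
      show "h ` carrier (rho_group n) \<subseteq> carrier (G ?R2)" using hom by (auto simp: hom_def)
    next
      show "carrier (G ?R2) \<subseteq> h ` carrier (rho_group n)"
      proof
        fix z assume "z \<in> carrier (G ?R2)"
        then obtain v where v: "z = pres_class ?R2 v" by (auto simp: carrier_G)
        have "fst ` set (subst (psi n) v) \<subseteq> (\<Union>g. fst ` set (psi n g))" by (rule fst_subst)
        also have "\<dots> \<subseteq> {1..n}" using assms by (auto simp: psi_def split: gxy.splits)
        finally have s: "set (subst (psi n) v) \<subseteq> {1..n} \<times> UNIV" by force
        have "h (pres_class ?R1 (subst (psi n) v)) = z" using v by (simp add: hc fwd)
        moreover have "pres_class ?R1 (subst (psi n) v) \<in> carrier (rho_group n)" using carr1 s by blast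
        ultimately show "z \<in> h ` carrier (rho_group n)" by blast
      qed
    qed
  qed
  have "h \<in> iso (rho_group n) (torus_group n (n + 1))"
    unfolding T iso_def using hom bij by blast
  moreover have "\<forall>i\<in>{1..n}. h (pres_class (rho_rels n) [(i, False)]) =
              pres_class (torus_rels n (n + 1)) (replicate i (X, False) @ replicate i (Y, True))"
    by (simp add: hc phi_def)
  ultimately show ?thesis by blast
qed

end
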